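(* Let $p\in(0,1]$, $c\ge0$, $\beta<1$, $\delta\in(0,1)$ with $c<\frac12p+\frac12(\beta-1)p^2$, and let $R=\frac12$, $T=p+(1-p)\frac12-c$, $S=(1-p)\frac12$, $Q=p^2\frac12\beta+p(1-p)+(1-p)^2\frac12-c$. For an integer $k\ge1$ let \[V_k=T+\sum_{i=1}^{k-1}\delta^iQ+\delta^kS+\frac{\delta^{k+1}}{1-\delta}R\] be Player 1's payoff when Player 1 defects in rounds $1,\dots,k$ and cooperates afterwards, while Player 2 cooperates in round 1, defects in rounds $2,\dots,k+1$ and cooperates afterwards. Then: (i) if $\delta\ge\frac{Q-S}{R-S}=p\beta+(1-p)-\frac{2c}{p}$, then $V_1\ge V_k$ for all $k\ge1$ (defecting for only one round is optimal among these plans); (ii) if $\delta<\frac{Q-S}{R-S}=p\beta+(1-p)-\frac{2c}{p}$, then $V_{k+1}>V_k$ for every $k\ge1$, so it is optimal for Player 1 to defect indefinitely ($k\to\infty$).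
   Context: Model: two content providers in an infinitely repeated game choose each period to cooperate ($C$) or attack/defect ($D$). $p$: attack success probability; $c$: cost per attack; $\beta<1$: market degradation factor; $\delta$: discount factor. Stage payoffs: mutual cooperation $R$ each; a lone attacker $T$, the cooperator facing an attack $S$; mutual attack $Q$ each. The setting models Tit-for-Tat retaliation against $k$ consecutive defections. The condition on $c$ is the standing Prisoners' Dilemma assumption $T>R>Q>S$. *)

theory Defs
  imports Complex_Main
begin

definition payR :: real where "payR = 1/2"
definition payT :: "real \<Rightarrow> real \<Rightarrow> real" where "payT p c = p + (1 - p) * (1/2) - c"
definition payS :: "real \<Rightarrow> real" where "payS p = (1 - p) * (1/2)"
definition payQ :: "real \<Rightarrow> real \<Rightarrow> real \<Rightarrow> real" where
  "payQ p c \<beta> = p^2 * (1/2) * \<beta> + p * (1 - p) + (1 - p)^2 * (1/2) - c"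

definition Vk :: "real \<Rightarrow> real \<Rightarrow> real \<Rightarrow> real \<Rightarrow> nat \<Rightarrow> real" where
  "Vk p c \<beta> \<delta> k = payT p c + (\<Sum>i\<in>{1..<k}. \<delta>^i * payQ p c \<beta>) + \<delta>^k * payS p
     + \<delta>^(k+1) / (1 - \<delta>) * payR"

end

theory Submission
  imports Defs
begin

lemma Vk_diff:
  assumes "k \<ge> 1" "\<delta> \<noteq> 1"
  shows "Vk p c \<beta> \<delta> (Suc k) - Vk p c \<beta> \<delta> k
     = \<delta>^k * ((payQ p c \<beta> - payS p) - \<delta> * (payR - payS p))"
proof -
  have s: "(\<Sum>i\<in>{1..<Suc k}. \<delta>^i * payQ p c \<beta>) = (\<Sum>i\<in>{1..<k}. \<delta>^i * payQ p c \<beta>) + \<delta>^k * payQ p c \<beta>"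
    using assms(1) by simp
  have d: "1 - \<delta> \<noteq> 0" using assms(2) by simp
  have f: "\<delta>^(Suc k+1) / (1 - \<delta>) - \<delta>^(k+1) / (1 - \<delta>) = -(\<delta>^(k+1))"
  proof -
    have "\<delta>^(Suc k+1) / (1 - \<delta>) - \<delta>^(k+1) / (1 - \<delta>) = \<delta>^(k+1) * (\<delta> - 1) / (1 - \<delta>)"
      by (simp add: diff_divide_distrib[symmetric] algebra_simps)
    also have "\<dots> = -(\<delta>^(k+1))" using d by (simp add: field_simps)
    finally show ?thesis .
  qed
  have "Vk p c \<beta> \<delta> (Suc k) - Vk p c \<beta> \<delta> k = \<delta>^k * payQ p c \<beta> + \<delta>^(Suc k) * payS p - \<delta>^k * payS p
     + (\<delta>^(Suc k+1) / (1 - \<delta>) - \<delta>^(k+1) / (1 - \<delta>)) * payR"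
    unfolding Vk_def s by (simp add: algebra_simps)
  also have "\<dots> = \<delta>^k * ((payQ p c \<beta> - payS p) - \<delta> * (payR - payS p))"
    unfolding f by (simp add: algebra_simps)
  finally show ?thesis .
qed

theorem theorem5:
  fixes p c \<beta> \<delta> :: real
  assumes "0 < p" "p \<le> 1" "0 \<le> c" "\<beta> < 1" "0 < \<delta>" "\<delta> < 1"
    and "c < 1/2 * p + 1/2 * (\<beta> - 1) * p^2"
  shows "(payQ p c \<beta> - payS p) / (payR - payS p) = p * \<beta> + (1 - p) - 2 * c / p
    \<and> (\<delta> \<ge> (payQ p c \<beta> - payS p) / (payR - payS p) \<longrightarrow>
         (\<forall>k::nat. k \<ge> 1 \<longrightarrow> Vk p c \<beta> \<delta> 1 \<ge> Vk p c \<beta> \<delta> k))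
    \<and> (\<delta> < (payQ p c \<beta> - payS p) / (payR - payS p) \<longrightarrow>
         (\<forall>k::nat. k \<ge> 1 \<longrightarrow> Vk p c \<beta> \<delta> (k+1) > Vk p c \<beta> \<delta> k))"
proof -
  have RS: "payR - payS p = p/2" unfolding payR_def payS_def by (simp add: field_simps)
  have RSpos: "payR - payS p > 0" using RS assms(1) by simp
  have eq: "(payQ p c \<beta> - payS p) / (payR - payS p) = p * \<beta> + (1 - p) - 2 * c / p"
    unfolding RS unfolding payQ_def payS_def using assms(1)
    by (simp add: field_simps power2_eq_square)
  have ii: "\<delta> < (payQ p c \<beta> - payS p) / (payR - payS p) \<longrightarrow>
         (\<forall>k::nat. k \<ge> 1 \<longrightarrow> Vk p c \<beta> \<delta> (k+1) > Vk p c \<beta> \<delta> k)"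
  proof (intro impI allI)
    fix k :: nat assume h: "\<delta> < (payQ p c \<beta> - payS p) / (payR - payS p)" and k: "k \<ge> 1"
    have "\<delta> * (payR - payS p) < payQ p c \<beta> - payS p" using h RSpos by (simp add: pos_less_divide_eq)
    hence "\<delta>^k * ((payQ p c \<beta> - payS p) - \<delta> * (payR - payS p)) > 0" using assms(5) by simp
    thus "Vk p c \<beta> \<delta> (k+1) > Vk p c \<beta> \<delta> k" using Vk_diff[OF k, where \<delta>=\<delta> and p=p and c=c and \<beta>=\<beta>] assms(6) by simp
  qed
  have i: "\<delta> \<ge> (payQ p c \<beta> - payS p) / (payR - payS p) \<longrightarrow>
         (\<forall>k::nat. k \<ge> 1 \<longrightarrow> Vk p c \<beta> \<delta> 1 \<ge> Vk p c \<beta> \<delta> k)"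
  proof (intro impI allI)
    fix k :: nat assume h: "\<delta> \<ge> (payQ p c \<beta> - payS p) / (payR - payS p)" and k: "k \<ge> 1"
    have "\<delta> * (payR - payS p) \<ge> payQ p c \<beta> - payS p" using h RSpos by (simp add: pos_divide_le_eq)
    hence stp: "\<And>j. j \<ge> 1 \<Longrightarrow> Vk p c \<beta> \<delta> (Suc j) \<le> Vk p c \<beta> \<delta> j"
    proof -
      fix j :: nat assume j: "j \<ge> 1"
      assume a: "\<delta> * (payR - payS p) \<ge> payQ p c \<beta> - payS p"
      have "\<delta>^j * ((payQ p c \<beta> - payS p) - \<delta> * (payR - payS p)) \<le> 0"
        using a assms(5) by (simp add: mult_nonneg_nonpos)
      thus "Vk p c \<beta> \<delta> (Suc j) \<le> Vk p c \<beta> \<delta> j" using Vk_diff[OF j, where \<delta>=\<delta> and p=p and c=c and \<beta>=\<beta>] assms(6) by simp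
    qed
    show "Vk p c \<beta> \<delta> 1 \<ge> Vk p c \<beta> \<delta> k" using k
    proof (induction k rule: dec_induct)
      case base then show ?case by simp
    next
      case (step n) then show ?case using stp[of n] by simp
    qed
  qed
  show ?thesis using eq i ii by blast
qed

end
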